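(* Let $a\geq 2$. For Lebesgue-almost every $x\in\Lambda^{a+1}$ we have $\lim_{k\to\infty}T_{a,1}^k(x)=(0,\ldots,0)$ and $\sigma(x)=\sum_{k=0}^{\infty}x_a^{(k)}$.
   Context: For $n\geq 1$ let $\Lambda^n=\{x\in\mathbb{R}^n : 0\leq x_1\leq\cdots\leq x_n\}$. The map $T_{a,1}:\Lambda^{a+1}\to\Lambda^{a+1}$ sends $x$ to the vector obtained by arranging $x_1,\ldots,x_a,\,x_{a+1}-x_a$ in nondecreasing order. Write $x^{(k)}=T_{a,1}^k(x)$ (so $x^{(0)}=x$) and $x^{(k)}_i$ for its $i$-th coordinate; $\sigma(x)=x_1+\cdots+x_{a+1}$. *)

theory Defs
  imports "HOL-Analysis.Analysis" "HOL-Probability.Probability"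
begin

(* Points of R^n are represented as functions nat => real, coordinate x_i (1-based in
   the paper) being  x (i-1); the relevant coordinates are 0..n-1.  Lebesgue measure on
   R^n is the product measure  PiM {..<n} (\<lambda>_. lborel). *)

definition Lambda :: "nat \<Rightarrow> (nat \<Rightarrow> real) set" where
  "Lambda n = {x. (0 < n \<longrightarrow> 0 \<le> x 0) \<and> (\<forall>i. Suc i < n \<longrightarrow> x i \<le> x (Suc i))}"

definition T :: "nat \<Rightarrow> (nat \<Rightarrow> real) \<Rightarrow> (nat \<Rightarrow> real)" where
  "T a x = (let L = sort (map x [0..<a] @ [x a - x (a - 1)])
            in (\<lambda>i. if i < a + 1 then L ! i else undefined))"

definition sigma :: "nat \<Rightarrow> (nat \<Rightarrow> real) \<Rightarrow> real" where
  "sigma a x = (\<Sum>i<a+1. x i)"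

end

theory Submission
  imports Defs "HOL-Combinatorics.List_Permutation"
begin


lemma hyperplane_null:
  fixes c :: "nat \<Rightarrow> real" and I :: "nat set"
  assumes fin: "finite I" and j: "j \<in> I" and cj: "c j \<noteq> 0"
  shows "{x \<in> space (PiM I (\<lambda>_. lborel)). (\<Sum>i\<in>I. c i * x i) = 0} \<in> null_sets (PiM I (\<lambda>_. lborel))"
proof -
  interpret product_sigma_finite "\<lambda>_::nat. lborel :: real measure"
    by (simp add: product_sigma_finite_def lborel.sigma_finite_measure_axioms)
  define J where "J = I - {j}"
  have IJ: "I = insert j J" "j \<notin> J" "finite J" using j fin by (auto simp: J_def)
  define H where "H = {x \<in> space (PiM I (\<lambda>_. lborel)). (\<Sum>i\<in>I. c i * x i) = 0}"
  have Hm[measurable]: "H \<in> sets (PiM I (\<lambda>_. lborel))" unfolding H_def by measurable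
  have "emeasure (PiM I (\<lambda>_. lborel)) H = (\<integral>\<^sup>+ x. indicator H x \<partial>PiM I (\<lambda>_. lborel))"
    by simp
  also have "\<dots> = (\<integral>\<^sup>+ x. (\<integral>\<^sup>+ y. indicator H (x(j := y)) \<partial>lborel) \<partial>PiM J (\<lambda>_. lborel))"
    unfolding IJ(1) by (rule product_nn_integral_insert) (use IJ Hm in auto)
  also have "\<dots> = 0"
  proof -
  have inner: "(\<integral>\<^sup>+ y. indicator H (x(j := y)) \<partial>(lborel::real measure)) = 0" for x :: "nat \<Rightarrow> real"
  proof -
    define r where "r = (\<Sum>i\<in>J. c i * x i)"
    have "(\<integral>\<^sup>+ y. indicator H (x(j := y)) \<partial>lborel) \<le> (\<integral>\<^sup>+ y. indicator {- r / c j} y \<partial>lborel)"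
    proof (rule nn_integral_mono)
      fix y :: real
      show "indicator H (x(j := y)) \<le> (indicator {- r / c j} y :: ennreal)"
      proof (cases "x(j := y) \<in> H")
        case True
        then have "(\<Sum>i\<in>insert j J. c i * (x(j := y)) i) = 0" by (simp add: H_def IJ(1))
        then have "c j * y + (\<Sum>i\<in>J. c i * (x(j := y)) i) = 0" using IJ by simp
        moreover have "(\<Sum>i\<in>J. c i * (x(j := y)) i) = r" unfolding r_def
          by (rule sum.cong) (use IJ in auto)
        ultimately have "y = - r / c j" using cj by (simp add: field_simps)
        then show ?thesis using True by simp
      qed simp
    qed
    also have "\<dots> = 0" by simp
    finally show "(\<integral>\<^sup>+ y. indicator H (x(j := y)) \<partial>lborel) = 0" by simp
  qed
  show ?thesis by (simp add: inner)
  qed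
  finally show ?thesis using Hm unfolding H_def by (simp add: null_sets_def)
qed


definition good :: "nat \<Rightarrow> (nat \<Rightarrow> real) \<Rightarrow> bool" where
  "good a y \<longleftrightarrow> (\<forall>c::nat\<Rightarrow>int. (\<exists>i<a+1. c i \<noteq> 0) \<longrightarrow> (\<Sum>i<a+1. of_int (c i) * y i) \<noteq> 0)"

definition TL :: "nat \<Rightarrow> (nat \<Rightarrow> real) \<Rightarrow> real list" where
  "TL a y = map y [0..<a] @ [y a - y (a - 1)]"

lemma TL_map: "TL a y = map (\<lambda>i. if i < a then y i else y a - y (a - 1)) [0..<a+1]"
  by (simp add: TL_def map_eq_conv)

lemma T_nth: "i < a + 1 \<Longrightarrow> T a y i = sort (TL a y) ! i"
  by (simp add: T_def Let_def TL_def)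

lemma Lambda_mono:
  assumes "y \<in> Lambda n" "i \<le> j" "j < n"
  shows "y i \<le> y j"
  using assms(2,3)
proof (induction j)
  case 0 then show ?case by simp
next
  case (Suc j)
  show ?case
  proof (cases "i = Suc j")
    case False
    then have "y i \<le> y j" using Suc by simp
    also have "y j \<le> y (Suc j)" using assms(1) Suc.prems by (simp add: Lambda_def)
    finally show ?thesis .
  qed simp
qed

lemma Lambda_nonneg:
  assumes "y \<in> Lambda n" "i < n"
  shows "0 \<le> y i"
proof -
  have "0 \<le> y 0" using assms by (simp add: Lambda_def)
  also have "y 0 \<le> y i" using Lambda_mono[OF assms(1) _ assms(2)] by simp
  finally show ?thesis .
qed

lemma T_Lambda:
  assumes y: "y \<in> Lambda (a+1)" and a: "a \<ge> 1"
  shows "T a y \<in> Lambda (a+1)"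
proof -
  have len: "length (sort (TL a y)) = a + 1" by (simp add: TL_def)
  have s: "sorted (sort (TL a y))" by simp
  have nn: "\<forall>v\<in>set (TL a y). 0 \<le> v"
  proof
    fix v assume "v \<in> set (TL a y)"
    then have "v \<in> (\<lambda>i. if i < a then y i else y a - y (a - 1)) ` {..<a+1}"
      by (simp only: TL_map set_map set_upt atLeast0LessThan)
    then obtain i where i: "i < a + 1" "v = (if i < a then y i else y a - y (a - 1))"
      by blast
    show "0 \<le> v"
    proof (cases "i < a")
      case True then show ?thesis using i Lambda_nonneg[OF y, of i] by simp
    next
      case False then show ?thesis using i Lambda_mono[OF y, of "a-1" a] by simp
    qed
  qed
  have "0 \<le> sort (TL a y) ! 0"
    using nn len by (metis add_gr_0 nth_mem set_sort zero_less_one)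
  moreover have "sort (TL a y) ! i \<le> sort (TL a y) ! Suc i" if "Suc i < a + 1" for i
    using sorted_nth_mono[OF s, of i "Suc i"] that len by simp
  ultimately show ?thesis
    by (simp add: Lambda_def T_nth)
qed

lemma sigma_T:
  assumes a: "a \<ge> 1"
  shows "sigma a (T a y) = sigma a y - y (a - 1)"
proof -
  have len: "length (sort (TL a y)) = a + 1" by (simp add: TL_def)
  have "sigma a (T a y) = (\<Sum>i<a+1. sort (TL a y) ! i)"
    by (simp add: sigma_def T_nth)
  also have "\<dots> = sum_list (sort (TL a y))"
    using len by (simp add: sum_list_sum_nth lessThan_atLeast0)
  also have "\<dots> = sum_list (TL a y)"
    by (metis mset_sort sum_mset_sum_list)
  also have "\<dots> = (\<Sum>i<a. y i) + (y a - y (a - 1))"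
    by (simp add: TL_def sum_list_distinct_conv_sum_set atLeast0LessThan)
  also have "\<dots> = sigma a y - y (a - 1)" by (simp add: sigma_def)
  finally show ?thesis .
qed

lemma T_frozen:
  assumes y: "y \<in> Lambda (a+1)" and a: "a \<ge> 1" and big: "y (a - 1) \<le> y a - y (a - 1)"
  shows "T a y (a - 1) = y (a - 1)"
proof -
  have "sorted (map y [0..<a])"
    unfolding sorted_iff_nth_mono using Lambda_mono[OF y] by auto
  moreover have "\<forall>v\<in>set (map y [0..<a]). v \<le> y a - y (a - 1)"
  proof
    fix v assume "v \<in> set (map y [0..<a])"
    then obtain i where "i < a" "v = y i" by auto
    then have "v \<le> y (a - 1)" using Lambda_mono[OF y, of i "a-1"] by simp
    then show "v \<le> y a - y (a - 1)" using big by simp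
  qed
  ultimately have "sorted (TL a y)" by (simp add: TL_def sorted_append)
  then have "sort (TL a y) = TL a y" by (simp add: sorted_sort_id)
  then show ?thesis using a by (simp add: T_nth TL_def nth_append)
qed

lemma good_T:
  assumes g: "good a y" and a: "a \<ge> 1"
  shows "good a (T a y)"
  unfolding good_def
proof (intro allI impI)
  fix c :: "nat \<Rightarrow> int"
  assume cnz: "\<exists>i<a+1. c i \<noteq> 0"
  define f where "f = (\<lambda>i. if i < a then y i else y a - y (a - 1))"
  have TLf: "TL a y = map f [0..<a+1]" unfolding TL_map f_def ..
  have "mset (sort (TL a y)) = mset (TL a y)" by simp
  from permutation_Ex_bij[OF this] obtain p where
    p: "bij_betw p {..<a+1} {..<a+1}" "\<forall>i<a+1. sort (TL a y) ! i = TL a y ! p i"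
    by (auto simp: TL_def)
  have pi: "i < a+1 \<Longrightarrow> p i < a+1" for i using p(1) by (auto simp: bij_betw_def)
  have Tp: "T a y i = f (p i)" if "i < a+1" for i
  proof -
    have "T a y i = TL a y ! p i" using that p(2) T_nth by simp
    also have "\<dots> = f (p i)" unfolding TLf using pi[OF that] by (simp del: upt_Suc)
    finally show ?thesis .
  qed
  define q where "q = inv_into {..<a+1} p"
  define d where "d = (\<lambda>j. c (q j))"
  have dp: "i < a+1 \<Longrightarrow> d (p i) = c i" for i
    using p(1) by (simp add: d_def q_def bij_betw_inv_into_left)
  have "(\<Sum>i<a+1. of_int (c i) * T a y i) = (\<Sum>i<a+1. of_int (d (p i)) * f (p i))"
    by (rule sum.cong) (simp_all add: Tp dp)
  also have "\<dots> = (\<Sum>j<a+1. of_int (d j) * f j)"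
    using sum.reindex_bij_betw[OF p(1), of "\<lambda>j. of_int (d j) * f j"] by simp
  also have "\<dots> = (\<Sum>j<a. of_int (d j) * y j) + of_int (d a) * (y a - y (a - 1))"
    by (simp add: f_def)
  also have "\<dots> = (\<Sum>j<a+1. of_int (d j - (if j = a - 1 then d a else 0)) * y j)"
  proof -
    have "(\<Sum>j<a. of_int (d j - (if j = a - 1 then d a else 0)) * y j)
        = (\<Sum>j<a. of_int (d j) * y j - (if j = a - 1 then of_int (d a) * y j else 0))"
      by (rule sum.cong) (auto simp: left_diff_distrib)
    also have "\<dots> = (\<Sum>j<a. of_int (d j) * y j) - (\<Sum>j<a. (if j = a - 1 then of_int (d a) * y j else 0))"
      by (rule sum_subtractf)
    also have "(\<Sum>j<a. (if j = a - 1 then of_int (d a) * y j else 0)) = of_int (d a) * y (a - 1)"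
      using a by (subst sum.delta) auto
    finally have "(\<Sum>j<a. of_int (d j - (if j = a - 1 then d a else 0)) * y j)
       = (\<Sum>j<a. of_int (d j) * y j) - of_int (d a) * y (a - 1)" .
    moreover have "(\<Sum>j<a+1. of_int (d j - (if j = a - 1 then d a else 0)) * y j)
       = (\<Sum>j<a. of_int (d j - (if j = a - 1 then d a else 0)) * y j) + of_int (d a) * y a"
      using a by simp
    ultimately show ?thesis by (simp add: algebra_simps)
  qed
  finally have eq: "(\<Sum>i<a+1. of_int (c i) * T a y i) = (\<Sum>j<a+1. of_int (d j - (if j = a - 1 then d a else 0)) * y j)"
    by simp
  have "\<exists>j<a+1. d j - (if j = a - 1 then d a else 0) \<noteq> 0"
  proof (cases "d a = 0")
    case True
    from cnz obtain i where "i < a+1" "c i \<noteq> 0" by auto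
    then have "d (p i) \<noteq> 0" "p i < a+1" using dp pi by auto
    then show ?thesis using True by (intro exI[of _ "p i"]) auto
  next
    case False
    then show ?thesis using a by (intro exI[of _ a]) auto
  qed
  then have "(\<Sum>j<a+1. of_int (d j - (if j = a - 1 then d a else 0)) * y j) \<noteq> 0"
    using g unfolding good_def
    by (elim allE[of _ "\<lambda>j. d j - (if j = a - 1 then d a else 0)"]) blast
  then show "(\<Sum>i<a+1. of_int (c i) * T a y i) \<noteq> 0"
    using eq by simp
qed



lemma main_conv:
  assumes a2: "a \<ge> 2" and x: "x \<in> Lambda (a+1)" and g: "good a x"
  shows "(\<forall>i<a+1. (\<lambda>k. ((T a ^^ k) x) i) \<longlonglongrightarrow> 0) \<and>
         (\<lambda>k. ((T a ^^ k) x) (a - 1)) sums sigma a x"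
proof -
  have a: "a \<ge> 1" using a2 by simp
  define y where "y k = (T a ^^ k) x" for k
  define t where "t k = y k (a - 1)" for k
  have ySuc: "y (Suc k) = T a (y k)" for k by (simp add: y_def)
  have yL: "y k \<in> Lambda (a+1)" for k
  proof (induction k)
    case 0 show ?case using x by (simp add: y_def)
  next
    case (Suc k) show ?case unfolding ySuc by (rule T_Lambda[OF Suc.IH a])
  qed
  have yg: "good a (y k)" for k
  proof (induction k)
    case 0 show ?case using g by (simp add: y_def)
  next
    case (Suc k) show ?case unfolding ySuc by (rule good_T[OF Suc.IH a])
  qed
  have ynn: "0 \<le> y k i" if "i < a+1" for k i using Lambda_nonneg[OF yL that] .
  have tnn: "0 \<le> t k" for k using ynn[of "a-1" k] by (simp add: t_def)
  have ysig: "sigma a (y k) = sigma a x - (\<Sum>j<k. t j)" for k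
  proof (induction k)
    case 0 show ?case by (simp add: y_def)
  next
    case (Suc k) show ?case unfolding ySuc sigma_T[OF a] Suc.IH by (simp add: t_def)
  qed
  have signn: "0 \<le> sigma a (y k)" for k
    unfolding sigma_def by (rule sum_nonneg) (simp add: ynn)
  have coord_le: "y k i \<le> sigma a (y k)" if "i < a+1" for k i
    unfolding sigma_def by (rule member_le_sum) (use that ynn in auto)
  have bnd: "(\<Sum>j<k. t j) \<le> sigma a x" for k
    using signn[of k] unfolding ysig by simp
  have summ: "summable t"
    by (rule summableI_nonneg_bounded[where x="sigma a x"]) (use tnn bnd in auto)
  define S where "S = sigma a x - suminf t"
  have sigS: "(\<lambda>k. sigma a (y k)) \<longlonglongrightarrow> S"
    unfolding ysig S_def by (intro tendsto_intros summable_LIMSEQ summ)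
  have t0: "t \<longlonglongrightarrow> 0" using summable_LIMSEQ_zero[OF summ] .
  have sigge: "S \<le> sigma a (y k)" for k
    unfolding ysig S_def using sum_le_suminf[OF summ, of "{..<k}"] tnn by auto
  have S0: "S = 0"
  proof (rule ccontr)
    assume "S \<noteq> 0"
    moreover have "S \<ge> 0" using sigge[of 0] signn[of 0] sigS
      by (intro LIMSEQ_le_const[OF sigS]) (simp add: signn)
    ultimately have Spos: "S > 0" by simp
    define eps where "eps = S / (real a + 2)"
    have epos: "eps > 0" using Spos by (simp add: eps_def)
    have "eventually (\<lambda>k. t k < eps) sequentially"
      using order_tendstoD(2)[OF t0 epos] .
    then obtain N where N: "\<And>k. k \<ge> N \<Longrightarrow> t k < eps" by (auto simp: eventually_sequentially)
    have step: "t (Suc k) = t k" if "k \<ge> N" for k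
    proof -
      have le: "y k i \<le> t k" if "i < a" for i
        unfolding t_def using Lambda_mono[OF yL, of i "a-1" k] that by simp
      have "(\<Sum>i<a. y k i) \<le> of_nat (card {..<a}) * t k"
        by (rule sum_bounded_above) (simp add: le)
      then have sa: "(\<Sum>i<a. y k i) \<le> a * t k" by simp
      have "sigma a (y k) = (\<Sum>i<a. y k i) + y k a" by (simp add: sigma_def)
      then have "y k a \<ge> S - a * t k" using sigge[of k] sa by linarith
      moreover have "S = (real a + 2) * eps" unfolding eps_def
        by (simp add: field_simps add_nonneg_pos)
      moreover have "(real a + 2) * t k \<le> (real a + 2) * eps"
        using N[OF that] by (intro mult_left_mono) auto
      moreover have "(real a + 2) * t k = real a * t k + 2 * t k" by (simp add: algebra_simps)
      ultimately have "y k a \<ge> 2 * t k" by linarith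
      then have "y k (a - 1) \<le> y k a - y k (a - 1)" by (simp add: t_def)
      then show ?thesis using T_frozen[OF yL a] by (simp add: t_def ySuc)
    qed
    have const: "t (k + N) = t N" for k
      by (induction k) (simp_all add: step)
    have "(\<lambda>k. t (k + N)) \<longlonglongrightarrow> 0" using LIMSEQ_ignore_initial_segment[OF t0] .
    then have "t N = 0" unfolding const by (simp add: LIMSEQ_const_iff)
    moreover have "t N \<noteq> 0"
    proof -
      have "(\<Sum>i<a+1. of_int (if i = a - 1 then 1 else 0) * y N i) \<noteq> 0"
        using yg[of N] a unfolding good_def
        by (elim allE[of _ "\<lambda>i. if i = a - 1 then 1 else 0"]) auto
      moreover have "(\<Sum>i<a+1. of_int (if i = a - 1 then 1 else 0) * y N i) = (\<Sum>i<a+1. if i = a - 1 then y N i else 0)"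
        by (rule sum.cong) auto
      moreover have "(\<Sum>i<a+1. if i = a - 1 then y N i else 0) = y N (a - 1)"
        by (subst sum.delta) auto
      ultimately show ?thesis by (simp add: t_def)
    qed
    ultimately show False by simp
  qed
  have conv: "(\<lambda>k. y k i) \<longlonglongrightarrow> 0" if "i < a+1" for i
    by (rule tendsto_sandwich[of "\<lambda>_. 0" _ _ "\<lambda>k. sigma a (y k)"])
       (use ynn[OF that] coord_le[OF that] sigS S0 in auto)
  have "t sums suminf t" using summ by (simp add: summable_sums)
  moreover have "suminf t = sigma a x" using S0 by (simp add: S_def)
  moreover have "t = (\<lambda>k. ((T a ^^ k) x) (a - 1))" by (simp add: fun_eq_iff t_def y_def)
  ultimately show ?thesis using conv unfolding y_def by simp
qed


lemma AE_good:
  "AE x in PiM {..<a+1} (\<lambda>_. lborel). good a x"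
proof -
  let ?M = "PiM {..<a+1} (\<lambda>_. lborel :: real measure)"
  let ?P = "\<lambda>cs x. length cs = a+1 \<and> (\<exists>i<a+1. cs!i \<noteq> (0::int)) \<longrightarrow>
              (\<Sum>i<a+1. of_int (cs!i) * x i) \<noteq> (0::real)"
  have "\<forall>cs\<in>UNIV. AE x in ?M. ?P cs x"
  proof
    fix cs :: "int list"
    show "AE x in ?M. ?P cs x"
    proof (cases "\<exists>i<a+1. cs!i \<noteq> 0")
      case True
      then obtain j where j: "j < a+1" "cs!j \<noteq> 0" by auto
      have N: "{x \<in> space ?M. (\<Sum>i\<in>{..<a+1}. real_of_int (cs!i) * x i) = 0} \<in> null_sets ?M"
        by (rule hyperplane_null) (use j in auto)
      show ?thesis by (rule AE_I'[OF N]) auto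
    qed simp
  qed
  then have "AE x in ?M. \<forall>cs\<in>UNIV. ?P cs x"
    by (subst AE_ball_countable) auto
  then show ?thesis
  proof (rule eventually_mono)
    fix x assume H: "\<forall>cs\<in>UNIV. ?P cs x"
    show "good a x" unfolding good_def
    proof (intro allI impI)
      fix c :: "nat \<Rightarrow> int" assume c: "\<exists>i<a+1. c i \<noteq> 0"
      have e: "i < a+1 \<Longrightarrow> map c [0..<a+1] ! i = c i" for i
        by (simp del: upt_Suc)
      have "?P (map c [0..<a+1]) x" using H by blast
      moreover have "\<exists>i<a+1. map c [0..<a+1] ! i \<noteq> 0" using c e by auto
      moreover have "(\<Sum>i<a+1. of_int (map c [0..<a+1] ! i) * x i) = (\<Sum>i<a+1. of_int (c i) * x i)"
        by (rule sum.cong[OF refl]) (metis e lessThan_iff)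
      ultimately show "(\<Sum>i<a+1. of_int (c i) * x i) \<noteq> 0" by simp
    qed
  qed
qed

theorem corollary4p4:
  fixes a :: nat
  assumes "a \<ge> 2"
  shows "AE x in PiM {..<a+1} (\<lambda>_. lborel).
           x \<in> Lambda (a+1) \<longrightarrow>
             ((\<forall>i<a+1. (\<lambda>k. ((T a ^^ k) x) i) \<longlonglongrightarrow> 0) \<and>
              (\<lambda>k. ((T a ^^ k) x) (a - 1)) sums sigma a x)"
  using AE_good[of a]
  by (rule eventually_mono) (use main_conv[OF assms] in blast)

end
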